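(* Every finite simple graph admits a rooted tree decomposition.
   Context: A tree decomposition of a graph $G$ is a pair $(T,\mathcal{V})$ with $T$ a tree and $\mathcal{V}=\{V_t\subseteq V(G): t\in V(T)\}$ such that (T1) $\bigcup_t V_t=V(G)$; (T2) every edge $uv$ of $G$ has both ends in some $V_t$; (T3) for each vertex $v$, the nodes $t$ with $v\in V_t$ induce a connected subtree of $T$. Its width is $\max_t|V_t|-1$, and the treewidth of $G$ is the minimum width of a tree decomposition. If $G$ has treewidth $k$, a tree decomposition $(T,\mathcal{V})$ is full if $|V_t|=k+1$ for every node $t$ and $|V_t\cap V_{t'}|=k$ for every edge $tt'$ of $T$. For a rooted tree $(T,r)$ and a node $t\neq r$, $p(t)$ denotes the neighbour of $t$ on the path from $t$ to $r$ (its parent), and the successors of $t$ are the nodes whose parent is $t$. A triple $(\mathcal{V},T,r)$ is a rooted tree decomposition of $G$ if $(T,\mathcal{V})$ is a full tree decomposition of $G$, $r\in V(T)$, and $V_t\cap V_{p(t)}\neq V_t\cap V_{t'}$ for every node $t\neq r$ and every successor $t'$ of $t$. *)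

theory Defs
  imports Main
begin

definition simple_graph :: "'a set \<Rightarrow> 'a set set \<Rightarrow> bool" where
  "simple_graph V E \<longleftrightarrow> E \<subseteq> {{u, v} | u v. u \<noteq> v \<and> u \<in> V \<and> v \<in> V}"

definition finite_simple_graph :: "'a set \<Rightarrow> 'a set set \<Rightarrow> bool" where
  "finite_simple_graph V E \<longleftrightarrow> finite V \<and> simple_graph V E"

definition is_path :: "'a set \<Rightarrow> 'a set set \<Rightarrow> 'a list \<Rightarrow> bool" where
  "is_path V E xs \<longleftrightarrow> xs \<noteq> [] \<and> distinct xs \<and> set xs \<subseteq> V \<and>
     (\<forall>i. Suc i < length xs \<longrightarrow> {xs ! i, xs ! Suc i} \<in> E)"

definition connected_on :: "'a set \<Rightarrow> 'a set set \<Rightarrow> 'a set \<Rightarrow> bool" where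
  "connected_on V E S \<longleftrightarrow>
     (\<forall>u\<in>S. \<forall>v\<in>S. \<exists>xs. is_path V E xs \<and> hd xs = u \<and> last xs = v \<and> set xs \<subseteq> S)"

definition has_cycle :: "'a set \<Rightarrow> 'a set set \<Rightarrow> bool" where
  "has_cycle V E \<longleftrightarrow> (\<exists>xs. is_path V E xs \<and> length xs \<ge> 3 \<and> {last xs, hd xs} \<in> E)"

definition is_tree :: "'b set \<Rightarrow> 'b set set \<Rightarrow> bool" where
  "is_tree N F \<longleftrightarrow> finite N \<and> N \<noteq> {} \<and> simple_graph N F \<and> connected_on N F N \<and> \<not> has_cycle N F"

definition tree_decomp :: "'a set \<Rightarrow> 'a set set \<Rightarrow> 'b set \<Rightarrow> 'b set set \<Rightarrow> ('b \<Rightarrow> 'a set) \<Rightarrow> bool" where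
  "tree_decomp V E N F B \<longleftrightarrow> is_tree N F \<and> (\<forall>t\<in>N. B t \<subseteq> V) \<and>
     (\<Union>t\<in>N. B t) = V \<and>
     (\<forall>e\<in>E. \<exists>t\<in>N. e \<subseteq> B t) \<and>
     (\<forall>v\<in>V. connected_on N F {t\<in>N. v \<in> B t})"

(* width = max bag size - 1 (as an integer, so that the empty graph has width -1) *)
definition td_width :: "'b set \<Rightarrow> ('b \<Rightarrow> 'a set) \<Rightarrow> int" where
  "td_width N B = int (Max ((\<lambda>t. card (B t)) ` N)) - 1"

(* treewidth: minimum width over all tree decompositions (tree nodes taken as naturals;
   every finite tree is isomorphic to one on nat, so this is no restriction) *)
definition treewidth :: "'a set \<Rightarrow> 'a set set \<Rightarrow> int" where
  "treewidth V E = Min {td_width N B | (N :: nat set) F B. tree_decomp V E N F B}"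

definition full_tree_decomp :: "'a set \<Rightarrow> 'a set set \<Rightarrow> 'b set \<Rightarrow> 'b set set \<Rightarrow> ('b \<Rightarrow> 'a set) \<Rightarrow> bool" where
  "full_tree_decomp V E N F B \<longleftrightarrow> tree_decomp V E N F B \<and>
     (\<forall>t\<in>N. int (card (B t)) = treewidth V E + 1) \<and>
     (\<forall>t t'. {t, t'} \<in> F \<longrightarrow> int (card (B t \<inter> B t')) = treewidth V E)"

definition tree_parent :: "'b set \<Rightarrow> 'b set set \<Rightarrow> 'b \<Rightarrow> 'b \<Rightarrow> 'b \<Rightarrow> bool" where
  "tree_parent N F r t s \<longleftrightarrow> t \<in> N \<and> t \<noteq> r \<and>
     (\<exists>xs. is_path N F xs \<and> hd xs = t \<and> last xs = r \<and> length xs \<ge> 2 \<and> xs ! 1 = s)"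

definition rooted_tree_decomp :: "'a set \<Rightarrow> 'a set set \<Rightarrow> 'b set \<Rightarrow> 'b set set \<Rightarrow> ('b \<Rightarrow> 'a set) \<Rightarrow> 'b \<Rightarrow> bool" where
  "rooted_tree_decomp V E N F B r \<longleftrightarrow> full_tree_decomp V E N F B \<and> r \<in> N \<and>
     (\<forall>t s t'. t \<in> N \<and> t \<noteq> r \<and> tree_parent N F r t s \<and> tree_parent N F r t' t
        \<longrightarrow> B t \<inter> B s \<noteq> B t \<inter> B t')"

end

theory Submission
  imports Defs
begin


lemma is_path_Cons:
  "is_path V E (x # ys) \<longleftrightarrow> x \<in> V \<and> x \<notin> set ys \<and> (ys = [] \<or> ({x, hd ys} \<in> E \<and> is_path V E ys))"
proof
  assume a: "is_path V E (x # ys)"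
  have "ys \<noteq> [] \<Longrightarrow> {x, hd ys} \<in> E"
    using a unfolding is_path_def by (metis Suc_less_eq hd_conv_nth length_Cons length_greater_0_conv nth_Cons_0 nth_Cons_Suc)
  moreover have "ys \<noteq> [] \<Longrightarrow> is_path V E ys"
    using a unfolding is_path_def by (metis Suc_less_eq distinct.simps(2) length_Cons list.set_intros(2) nth_Cons_Suc subset_code(1))
  ultimately show "x \<in> V \<and> x \<notin> set ys \<and> (ys = [] \<or> ({x, hd ys} \<in> E \<and> is_path V E ys))"
    using a unfolding is_path_def by auto
next
  assume a: "x \<in> V \<and> x \<notin> set ys \<and> (ys = [] \<or> ({x, hd ys} \<in> E \<and> is_path V E ys))"
  show "is_path V E (x # ys)"
  proof (cases "ys = []")
    case True then show ?thesis using a by (simp add: is_path_def)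
  next
    case False
    then have p: "is_path V E ys" "{x, hd ys} \<in> E" using a by auto
    have "\<forall>i. Suc i < length (x # ys) \<longrightarrow> {(x # ys) ! i, (x # ys) ! Suc i} \<in> E"
    proof (intro allI impI)
      fix i assume i: "Suc i < length (x # ys)"
      show "{(x # ys) ! i, (x # ys) ! Suc i} \<in> E"
      proof (cases i)
        case 0 then show ?thesis using p False by (simp add: hd_conv_nth)
      next
        case (Suc j) then show ?thesis using p i unfolding is_path_def by auto
      qed
    qed
    then show ?thesis using a p unfolding is_path_def by auto
  qed
qed

lemma is_path_single[simp]: "is_path V E [x] \<longleftrightarrow> x \<in> V"
  by (simp add: is_path_def)

lemma is_path_drop:
  assumes "is_path V E xs" "k < length xs"
  shows "is_path V E (drop k xs)"
proof -
  have "{drop k xs ! i, drop k xs ! Suc i} \<in> E" if "Suc i < length (drop k xs)" for i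
  proof -
    have "Suc (k + i) < length xs" using that by simp
    then have "{xs ! (k+i), xs ! Suc (k+i)} \<in> E" using assms unfolding is_path_def by blast
    then show ?thesis using assms by simp
  qed
  then show ?thesis using assms unfolding is_path_def by (auto dest: in_set_dropD)
qed

lemma is_path_take:
  assumes "is_path V E xs" "0 < k"
  shows "is_path V E (take k xs)"
  using assms unfolding is_path_def
  by (auto dest: in_set_takeD)

lemma is_path_rev:
  assumes "is_path V E xs"
  shows "is_path V E (rev xs)"
proof -
  have "{rev xs ! i, rev xs ! Suc i} \<in> E" if i: "Suc i < length xs" for i
  proof -
    define j where "j = length xs - Suc (Suc i)"
    have j1: "rev xs ! i = xs ! Suc j" using i by (simp add: rev_nth j_def Suc_diff_Suc)
    have j2: "rev xs ! Suc i = xs ! j" using i by (simp add: rev_nth j_def)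
    have "Suc j < length xs" using i by (simp add: j_def)
    then have "{xs ! j, xs ! Suc j} \<in> E" using assms unfolding is_path_def by auto
    then show ?thesis by (simp add: j1 j2 insert_commute)
  qed
  then show ?thesis using assms unfolding is_path_def by auto
qed

lemma is_path_mono:
  assumes "is_path V E xs" "V \<subseteq> V'" "E \<subseteq> E'"
  shows "is_path V' E' xs"
  using assms unfolding is_path_def by auto

lemma is_path_len: "is_path V E xs \<Longrightarrow> finite V \<Longrightarrow> length xs \<le> card V"
  unfolding is_path_def by (metis card_mono distinct_card)

lemma path_cons_short:
  assumes "is_path V E ys" "x \<in> V" "{x, hd ys} \<in> E"
  shows "\<exists>zs. is_path V E zs \<and> hd zs = x \<and> last zs = last ys \<and> set zs \<subseteq> insert x (set ys)"
proof (cases "x \<in> set ys")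
  case False
  have "ys \<noteq> []" using assms unfolding is_path_def by auto
  then show ?thesis using assms False
    by (intro exI[of _ "x # ys"]) (simp add: is_path_Cons)
next
  case True
  then obtain k where k: "k < length ys" "ys ! k = x" by (metis in_set_conv_nth)
  show ?thesis
    by (intro exI[of _ "drop k ys"]) (use k assms in \<open>auto simp: is_path_drop hd_drop_conv_nth dest: in_set_dropD\<close>)
qed

lemma path_trans:
  assumes "is_path V E xs" "is_path V E zs" "last xs = hd zs"
  shows "\<exists>ws. is_path V E ws \<and> hd ws = hd xs \<and> last ws = last zs \<and> set ws \<subseteq> set xs \<union> set zs"
  using assms
proof (induction xs)
  case Nil then show ?case by (simp add: is_path_def)
next
  case (Cons x xs)
  show ?case
  proof (cases "xs = []")
    case True then show ?thesis using Cons by (intro exI[of _ zs]) auto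
  next
    case False
    then have p: "is_path V E xs" "{x, hd xs} \<in> E" "x \<in> V" using Cons.prems by (auto simp: is_path_Cons)
    obtain ws where ws: "is_path V E ws" "hd ws = hd xs" "last ws = last zs" "set ws \<subseteq> set xs \<union> set zs"
      using Cons.IH[OF p(1) Cons.prems(2)] Cons.prems(3) False by auto
    obtain us where "is_path V E us" "hd us = x" "last us = last ws" "set us \<subseteq> insert x (set ws)"
      using path_cons_short[OF ws(1) p(3)] p(2) ws(2) by auto
    then show ?thesis using ws by (intro exI[of _ us]) auto
  qed
qed

lemma connected_onI:
  assumes "m \<in> S" "\<And>u. u \<in> S \<Longrightarrow> \<exists>xs. is_path V E xs \<and> hd xs = u \<and> last xs = m \<and> set xs \<subseteq> S"
  shows "connected_on V E S"
  unfolding connected_on_def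
proof (intro ballI)
  fix u v assume "u \<in> S" "v \<in> S"
  then obtain xs ys where xs: "is_path V E xs" "hd xs = u" "last xs = m" "set xs \<subseteq> S"
     and ys: "is_path V E ys" "hd ys = v" "last ys = m" "set ys \<subseteq> S" using assms by meson
  have ne: "ys \<noteq> []" using ys unfolding is_path_def by auto
  have "is_path V E (rev ys)" "hd (rev ys) = m" "last (rev ys) = v"
    using is_path_rev[OF ys(1)] ys ne by (auto simp: hd_rev last_rev)
  then obtain ws where "is_path V E ws \<and> hd ws = u \<and> last ws = v \<and> set ws \<subseteq> set xs \<union> set (rev ys)"
    using path_trans[OF xs(1), of "rev ys"] xs by auto
  then show "\<exists>xs. is_path V E xs \<and> hd xs = u \<and> last xs = v \<and> set xs \<subseteq> S" using xs ys by auto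
qed

lemma path_inj:
  assumes "is_path V E xs" "a < length xs" "b < length xs" "xs ! a = xs ! b"
  shows "a = b"
  using assms unfolding is_path_def by (simp add: nth_eq_iff_index_eq)

lemma path_edge:
  assumes "is_path V E xs" "Suc i < length xs"
  shows "{xs ! i, xs ! Suc i} \<in> E"
  using assms unfolding is_path_def by auto



definition pedges :: "nat \<Rightarrow> (nat \<Rightarrow> nat) \<Rightarrow> nat set set" where
  "pedges n par = {{i, par i} | i. 0 < i \<and> i < n}"

locale ptree =
  fixes n :: nat and par :: "nat \<Rightarrow> nat"
  assumes par_lt: "\<And>i. 0 < i \<Longrightarrow> i < n \<Longrightarrow> par i < i"
begin

abbreviation "F \<equiv> pedges n par"

lemma adj: "{a, b} \<in> F \<Longrightarrow> a < n \<and> b < n \<and> ((0 < a \<and> b = par a) \<or> (0 < b \<and> a = par b))"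
proof -
  assume e: "{a, b} \<in> F"
  obtain i where i: "{a, b} = {i, par i}" "0 < i" "i < n" using e unfolding pedges_def by auto
  have "par i < i" using par_lt i by simp
  then show ?thesis using i by (auto simp: doubleton_eq_iff)
qed

lemma edgeI: "0 < i \<Longrightarrow> i < n \<Longrightarrow> {i, par i} \<in> F"
  unfolding pedges_def by auto

lemma lt_adj: "{a, m} \<in> F \<Longrightarrow> a < m \<Longrightarrow> a = par m"
proof -
  assume e: "{a, m} \<in> F" and am: "a < m"
  have "\<not> (0 < a \<and> m = par a)" using par_lt[of a] adj[OF e] am by auto
  then show ?thesis using adj[OF e] by blast
qed

lemma lt_adj': "{m, a} \<in> F \<Longrightarrow> a < m \<Longrightarrow> a = par m"
  using lt_adj by (simp add: insert_commute)

lemma no_peak: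
  assumes p: "is_path V F xs" and l: "Suc (Suc j) < length xs"
    and a: "xs ! j < xs ! Suc j" and b: "xs ! Suc (Suc j) < xs ! Suc j"
  shows False
proof -
  have "xs ! j = par (xs ! Suc j)" using lt_adj[OF path_edge[OF p] a] l by simp
  moreover have "xs ! Suc (Suc j) = par (xs ! Suc j)" using lt_adj'[OF path_edge[OF p] b] l by simp
  ultimately show False using path_inj[OF p, of j "Suc (Suc j)"] l by simp
qed

lemma incr:
  assumes p: "is_path V F xs" and a: "Suc 0 < length xs" "xs ! 0 < xs ! Suc 0"
  shows "Suc j < length xs \<Longrightarrow> xs ! j < xs ! Suc j"
proof (induction j)
  case 0 then show ?case using a by simp
next
  case (Suc j)
  have "xs ! Suc (Suc j) \<noteq> xs ! Suc j" using path_inj[OF p, of "Suc (Suc j)" "Suc j"] Suc by auto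
  then show ?case using no_peak[OF p Suc.prems] Suc by fastforce
qed

lemma incr2:
  assumes p: "is_path V F xs" and a: "Suc 0 < length xs" "xs ! 0 < xs ! Suc 0"
  shows "0 < j \<Longrightarrow> j < length xs \<Longrightarrow> xs ! 0 < xs ! j"
proof (induction j)
  case 0 then show ?case by simp
next
  case (Suc j)
  then show ?case using incr[OF p a, of j] by (cases j) auto
qed

lemma tree_parent_eq:
  assumes "tree_parent {..<n} F 0 t s"
  shows "s = par t"
proof -
  obtain xs where xs: "is_path {..<n} F xs" "hd xs = t" "last xs = 0" "length xs \<ge> 2" "xs ! 1 = s"
    and t: "t \<noteq> 0" using assms unfolding tree_parent_def by auto
  have ne: "xs \<noteq> []" using xs(4) by auto
  have e: "{t, s} \<in> F" using path_edge[OF xs(1), of 0] xs hd_conv_nth[OF ne] by simp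
  show ?thesis
  proof (rule ccontr)
    assume "s \<noteq> par t"
    then have "t = par s" "0 < s" using adj[OF e] by auto
    then have "t < s" using par_lt adj[OF e] by auto
    then have "xs ! 0 < xs ! Suc 0" using xs hd_conv_nth[OF ne] by simp
    then have "xs ! 0 < xs ! (length xs - 1)" using incr2[OF xs(1), of "length xs - 1"] xs by auto
    then show False using xs last_conv_nth[OF ne] by simp
  qed
qed

lemma no_cycle: "\<not> has_cycle {..<n} F"
proof
  assume "has_cycle {..<n} F"
  then obtain xs where p: "is_path {..<n} F xs" and l: "length xs \<ge> 3" and c: "{last xs, hd xs} \<in> F"
    unfolding has_cycle_def by auto
  define L where "L = length xs"
  have ne: "xs \<noteq> []" using l by auto
  define m where "m = Max (set xs)"
  have "m \<in> set xs" using ne m_def by simp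
  then obtain i where i: "i < L" "xs ! i = m" unfolding L_def by (metis in_set_conv_nth)
  have le: "\<And>j. j < L \<Longrightarrow> xs ! j \<le> m" unfolding m_def L_def by simp
  have lt: "\<And>j. j < L \<Longrightarrow> j \<noteq> i \<Longrightarrow> xs ! j < m"
    using le i path_inj[OF p] L_def by (metis order_le_neq_trans)
  have hd: "hd xs = xs ! 0" and lst: "last xs = xs ! (L - 1)" using ne by (auto simp: hd_conv_nth last_conv_nth L_def)
  consider "i = 0" | "i = L - 1" | "0 < i" "i < L - 1" using i by linarith
  then show False
  proof cases
    case 1
    have "xs ! 1 = par m" using lt_adj[OF _ lt[of 1]] path_edge[OF p, of 0] l i 1 L_def by (simp add: insert_commute)
    moreover have "xs ! (L - 1) = par m" using lt_adj[OF _ lt[of "L-1"]] c l i 1 L_def hd lst by simp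
    moreover have "(1::nat) \<noteq> L - 1" "L - 1 < L" "1 < L" using l L_def by auto
    ultimately show False using path_inj[OF p, of 1 "L - 1"] L_def by auto
  next
    case 2
    have "xs ! (L - 2) = par m" using lt_adj[OF _ lt[of "L-2"]] path_edge[OF p, of "L - 2"] l i 2 L_def
      by (simp add: Suc_diff_Suc numeral_2_eq_2)
    moreover have "xs ! 0 = par m" using lt_adj'[OF _ lt[of 0]] c l i 2 L_def hd lst ne by simp
    moreover have "(0::nat) \<noteq> L - 2" "L - 2 < L" "0 < L" using l L_def by auto
    ultimately show False using path_inj[OF p, of 0 "L - 2"] L_def by auto
  next
    case 3
    then obtain j where j: "i = Suc j" by (cases i) auto
    have jj: "Suc (Suc j) < length xs" using 3 j L_def by linarith
    show False using no_peak[OF p jj] lt[of j] lt[of "Suc (Suc j)"] jj j i L_def by auto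
  qed
qed

lemma conn_closed:
  assumes S: "S \<subseteq> {..<n}" and cl: "\<And>i j. i \<in> S \<Longrightarrow> j \<in> S \<Longrightarrow> j < i \<Longrightarrow> par i \<in> S"
  shows "connected_on {..<n} F S"
proof (cases "S = {}")
  case True then show ?thesis by (simp add: connected_on_def)
next
  case False
  have fin: "finite S" using S finite_subset by blast
  define m where "m = Min S"
  have mS: "m \<in> S" using fin False m_def by simp
  have "u \<in> S \<longrightarrow> (\<exists>xs. is_path {..<n} F xs \<and> hd xs = u \<and> last xs = m \<and> set xs \<subseteq> S \<and> (\<forall>y\<in>set xs. y \<le> u))" for u
  proof (induction u rule: less_induct)
    case (less u)
    show ?case
    proof
      assume uS: "u \<in> S"
      show "\<exists>xs. is_path {..<n} F xs \<and> hd xs = u \<and> last xs = m \<and> set xs \<subseteq> S \<and> (\<forall>y\<in>set xs. y \<le> u)"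
      proof (cases "u = m")
        case True then show ?thesis using uS S by (intro exI[of _ "[m]"]) auto
      next
        case False
        have "m \<le> u" using fin uS m_def by simp
        then have mu: "m < u" using False by simp
        have un: "u < n" using uS S by auto
        have pl: "par u < u" using par_lt[of u] mu un by simp
        have pS: "par u \<in> S" using cl[OF uS mS mu] .
        obtain ys where ys: "is_path {..<n} F ys" "hd ys = par u" "last ys = m" "set ys \<subseteq> S" "\<forall>y\<in>set ys. y \<le> par u"
          using less.IH[OF pl] pS by auto
        have ne: "ys \<noteq> []" using ys unfolding is_path_def by auto
        have "is_path {..<n} F (u # ys)"
          using ys ne un pl edgeI[of u] mu by (auto simp: is_path_Cons insert_commute)
        then show ?thesis using ys ne uS pl by (intro exI[of _ "u # ys"]) auto
      qed
    qed
  qed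
  then show ?thesis using connected_onI[OF mS] by blast
qed

lemma is_tree: "0 < n \<Longrightarrow> is_tree {..<n} F"
  unfolding is_tree_def
proof (intro conjI)
  show "simple_graph {..<n} F"
    unfolding simple_graph_def pedges_def
  proof (intro subsetI)
    fix e assume "e \<in> {{i, par i} |i. 0 < i \<and> i < n}"
    then obtain i where "e = {i, par i}" "0 < i" "i < n" by auto
    moreover have "par i < i" using par_lt calculation by simp
    ultimately show "e \<in> {{u, v} |u v. u \<noteq> v \<and> u \<in> {..<n} \<and> v \<in> {..<n}}" by fastforce
  qed
  show "connected_on {..<n} F {..<n}"
  proof (rule conn_closed)
    fix i j assume "i \<in> {..<n}" "j \<in> {..<n}" "j < i"
    then have "par i < i" "i < n" using par_lt[of i] by auto
    then show "par i \<in> {..<n}" by simp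
  qed auto
  show "\<not> has_cycle {..<n} F" by (rule no_cycle)
qed auto

end


lemma edge_distinct: "simple_graph N F \<Longrightarrow> {a, b} \<in> F \<Longrightarrow> a \<noteq> b \<and> a \<in> N \<and> b \<in> N"
  unfolding simple_graph_def by (auto simp: doubleton_eq_iff)

lemma path_len2: "is_path V E xs \<Longrightarrow> hd xs \<noteq> last xs \<Longrightarrow> 2 \<le> length xs"
  unfolding is_path_def by (cases xs) (auto split: if_splits simp: Suc_le_eq)

definition is_leaf :: "'b set set \<Rightarrow> 'b \<Rightarrow> 'b \<Rightarrow> bool" where
  "is_leaf F l p \<longleftrightarrow> {l, p} \<in> F \<and> (\<forall>q. {l, q} \<in> F \<longrightarrow> q = p)"

lemma leaf_exists:
  assumes T: "is_tree N F" and ab: "a \<in> N" "b \<in> N" "a \<noteq> b"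
  shows "\<exists>l p. l \<in> N \<and> is_leaf F l p"
proof -
  have fin: "finite N" and sg: "simple_graph N F" and nc: "\<not> has_cycle N F" and cn: "connected_on N F N"
    using T unfolding is_tree_def by auto
  obtain xs0 where xs0: "is_path N F xs0" "hd xs0 = a" "last xs0 = b"
    using cn ab unfolding connected_on_def by blast
  let ?P = "\<lambda>xs. is_path N F xs \<and> 2 \<le> length xs"
  have "?P xs0" using xs0 path_len2[OF xs0(1)] ab by auto
  moreover have "\<forall>y. ?P y \<longrightarrow> length y < card N + 1" using is_path_len fin by fastforce
  ultimately obtain xs where xs: "?P xs" and mx: "\<And>y. ?P y \<Longrightarrow> length y \<le> length xs"
    using Lattices_Big.ex_has_greatest_nat[of ?P xs0 length "card N + 1"] by blast
  have ne: "xs \<noteq> []" using xs by auto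
  define l where "l = xs ! 0"
  define p where "p = xs ! 1"
  have hd: "hd xs = l" using ne l_def hd_conv_nth by auto
  have e: "{l, p} \<in> F" using path_edge[of N F xs 0] xs l_def p_def by auto
  have lN: "l \<in> N" using edge_distinct[OF sg e] by simp
  have "q = p" if q: "{l, q} \<in> F" for q
  proof (rule ccontr)
    assume qp: "q \<noteq> p"
    have qN: "q \<in> N" and ql: "q \<noteq> l" using edge_distinct[OF sg q] by auto
    show False
    proof (cases "q \<in> set xs")
      case False
      have "is_path N F (q # xs)" using xs qN False q hd ne by (auto simp: is_path_Cons insert_commute)
      then show False using mx[of "q # xs"] xs by auto
    next
      case True
      then obtain j where j: "j < length xs" "xs ! j = q" by (metis in_set_conv_nth)
      have j2: "2 \<le> j" using j ql qp l_def p_def by (cases j; cases "j - 1") auto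
      have tk: "take (Suc j) xs = take j xs @ [q]" using j by (simp add: take_Suc_conv_app_nth)
      have "is_path N F (take (Suc j) xs)" using is_path_take[of N F xs "Suc j"] xs by auto
      moreover have "length (take (Suc j) xs) \<ge> 3" using j j2 by auto
      moreover have "last (take (Suc j) xs) = q" using tk by simp
      moreover have "hd (take (Suc j) xs) = l" using hd ne by simp
      ultimately have "has_cycle N F" unfolding has_cycle_def using q by (metis insert_commute)
      then show False using nc by simp
    qed
  qed
  then show ?thesis using lN e unfolding is_leaf_def by blast
qed

lemma leaf_not_inner:
  assumes lf: "is_leaf F l p" and xs: "is_path N F xs" "hd xs \<noteq> l" "last xs \<noteq> l"
  shows "l \<notin> set xs"
proof
  assume "l \<in> set xs"
  then obtain i where i: "i < length xs" "xs ! i = l" by (metis in_set_conv_nth)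
  have ne: "xs \<noteq> []" using xs unfolding is_path_def by auto
  have "i \<noteq> 0" using i xs(2) ne by (metis hd_conv_nth)
  moreover have "i \<noteq> length xs - 1" using i xs(3) ne by (metis last_conv_nth)
  ultimately obtain j where j: "i = Suc j" "Suc (Suc j) < length xs" using i by (cases i) auto
  have "{xs ! j, l} \<in> F" using path_edge[OF xs(1), of j] i j by simp
  then have "xs ! j = p" using lf unfolding is_leaf_def by (metis insert_commute)
  moreover have "{l, xs ! Suc (Suc j)} \<in> F" using path_edge[OF xs(1), of "Suc j"] i j by simp
  then have "xs ! Suc (Suc j) = p" using lf unfolding is_leaf_def by blast
  ultimately show False using path_inj[OF xs(1), of j "Suc (Suc j)"] j by simp
qed

lemma leaf_first:
  assumes lf: "is_leaf F l p" and xs: "is_path N F xs" "hd xs = l" "last xs \<noteq> l"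
  shows "p \<in> set xs"
proof -
  have L: "2 \<le> length xs" using path_len2[OF xs(1)] xs by simp
  then have ne: "xs \<noteq> []" by auto
  have "{xs ! 0, xs ! 1} \<in> F" using path_edge[OF xs(1), of 0] L by simp
  then have "xs ! 1 = p" using lf xs ne hd_conv_nth unfolding is_leaf_def by metis
  then show ?thesis using L by (metis Suc_1 Suc_le_lessD nth_mem)
qed

lemma path_avoid:
  assumes "is_path N F xs" "l \<notin> set xs"
  shows "is_path (N - {l}) {e \<in> F. l \<notin> e} xs"
  using assms unfolding is_path_def by auto

lemma tree_remove_leaf:
  assumes T: "is_tree N F" and lf: "is_leaf F l p"
  shows "is_tree (N - {l}) {e \<in> F. l \<notin> e}"
proof -
  have fin: "finite N" and sg: "simple_graph N F" and nc: "\<not> has_cycle N F" and cn: "connected_on N F N"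
    using T unfolding is_tree_def by auto
  have e: "{l, p} \<in> F" using lf unfolding is_leaf_def by auto
  have pN: "p \<in> N - {l}" using edge_distinct[OF sg e] by auto
  have "simple_graph (N - {l}) {e \<in> F. l \<notin> e}" unfolding simple_graph_def
  proof
    fix e assume e: "e \<in> {e \<in> F. l \<notin> e}"
    then obtain u v where "e = {u, v}" "u \<noteq> v" "u \<in> N" "v \<in> N"
      using sg unfolding simple_graph_def by blast
    then show "e \<in> {{u, v} |u v. u \<noteq> v \<and> u \<in> N - {l} \<and> v \<in> N - {l}}" using e by blast
  qed
  moreover have "connected_on (N - {l}) {e \<in> F. l \<notin> e} (N - {l})"
    unfolding connected_on_def
  proof (intro ballI)
    fix u v assume uv: "u \<in> N - {l}" "v \<in> N - {l}"
    then obtain xs where xs: "is_path N F xs" "hd xs = u" "last xs = v" "set xs \<subseteq> N"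
      using cn unfolding connected_on_def by blast
    have "l \<notin> set xs" using leaf_not_inner[OF lf xs(1)] xs uv by auto
    then show "\<exists>xs. is_path (N - {l}) {e \<in> F. l \<notin> e} xs \<and> hd xs = u \<and> last xs = v \<and> set xs \<subseteq> N - {l}"
      using path_avoid[OF xs(1)] xs by blast
  qed
  moreover have "\<not> has_cycle (N - {l}) {e \<in> F. l \<notin> e}"
  proof
    assume "has_cycle (N - {l}) {e \<in> F. l \<notin> e}"
    then obtain xs where xs: "is_path (N - {l}) {e \<in> F. l \<notin> e} xs" "length xs \<ge> 3" "{last xs, hd xs} \<in> F"
      unfolding has_cycle_def by auto
    have "is_path N F xs" by (rule is_path_mono[OF xs(1)]) auto
    then show False using nc xs unfolding has_cycle_def by blast
  qed
  ultimately show ?thesis using fin pN unfolding is_tree_def by auto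
qed



definition td_in :: "nat set \<Rightarrow> nat set set \<Rightarrow> (nat \<Rightarrow> 'a set) \<Rightarrow> 'a set \<Rightarrow> nat \<Rightarrow> bool" where
  "td_in N F B V K \<longleftrightarrow> is_tree N F \<and> finite V \<and> K \<le> card V \<and> (\<forall>t\<in>N. B t \<subseteq> V \<and> card (B t) \<le> K) \<and>
     (\<Union>t\<in>N. B t) = V \<and> (\<forall>v\<in>V. connected_on N F {t\<in>N. v \<in> B t})"

definition td_out :: "'a set \<Rightarrow> nat \<Rightarrow> nat \<Rightarrow> (nat \<Rightarrow> nat) \<Rightarrow> (nat \<Rightarrow> 'a set) \<Rightarrow> bool" where
  "td_out V K n par B \<longleftrightarrow> 0 < n \<and> (\<forall>i. 0 < i \<and> i < n \<longrightarrow> par i < i) \<and>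
     (\<forall>i<n. B i \<subseteq> V \<and> card (B i) = K) \<and>
     (\<forall>i. 0 < i \<and> i < n \<longrightarrow> card (B i \<inter> B (par i)) + 1 = K) \<and>
     (\<forall>i j. 0 < i \<and> i < n \<and> 0 < j \<and> j < n \<and> par j = i \<longrightarrow> B i \<inter> B (par i) \<noteq> B i \<inter> B j) \<and>
     (\<forall>x i j. 0 < i \<and> i < n \<and> j < i \<and> x \<in> B i \<and> x \<in> B j \<longrightarrow> x \<in> B (par i)) \<and>
     (\<Union>i<n. B i) = V"

lemma add_node:
  assumes o: "td_out V2 K n par B'" and v: "v \<notin> V2" and fin: "finite V2"
    and S: "card S + 1 = K" "S \<subseteq> B' s" "s < n"
  shows "\<exists>u. td_out (insert v V2) K (Suc n) (par(n := u)) (B'(n := insert v S))"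
proof -
  define u where "u = (LEAST u. u < n \<and> S \<subseteq> B' u)"
  have u: "u < n" "S \<subseteq> B' u" using LeastI[of "\<lambda>u. u < n \<and> S \<subseteq> B' u" s] S u_def by auto
  have umin: "\<And>w. w < u \<Longrightarrow> \<not> S \<subseteq> B' w" using not_less_Least[of _ "\<lambda>u. u < n \<and> S \<subseteq> B' u"] u u_def
    by (metis order.strict_trans)
  have pl: "\<And>i. 0 < i \<Longrightarrow> i < n \<Longrightarrow> par i < i" using o unfolding td_out_def by auto
  have bags: "\<And>i. i < n \<Longrightarrow> B' i \<subseteq> V2 \<and> card (B' i) = K" using o unfolding td_out_def by auto
  have ed: "\<And>i. 0 < i \<Longrightarrow> i < n \<Longrightarrow> card (B' i \<inter> B' (par i)) + 1 = K" using o unfolding td_out_def by auto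
  have rt: "\<And>i j. 0 < i \<Longrightarrow> i < n \<Longrightarrow> 0 < j \<Longrightarrow> j < n \<Longrightarrow> par j = i \<Longrightarrow> B' i \<inter> B' (par i) \<noteq> B' i \<inter> B' j"
    using o unfolding td_out_def by auto
  have cl: "\<And>x i j. 0 < i \<Longrightarrow> i < n \<Longrightarrow> j < i \<Longrightarrow> x \<in> B' i \<Longrightarrow> x \<in> B' j \<Longrightarrow> x \<in> B' (par i)"
    using o unfolding td_out_def by blast
  have un: "(\<Union>i<n. B' i) = V2" and n0: "0 < n" using o unfolding td_out_def by auto
  have vB: "\<And>i. i < n \<Longrightarrow> v \<notin> B' i" using bags v by auto
  have Ssub: "S \<subseteq> V2" using S bags by blast
  have vS: "v \<notin> S" using Ssub v by auto
  have finS: "finite S" using Ssub fin finite_subset by blast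
  have cardn: "card (insert v S) = K" using finS vS S by simp
  have int_n: "insert v S \<inter> B' u = S" using u vB by auto
  let ?p = "par(n := u)" and ?B = "B'(n := insert v S)"
  have "0 < Suc n" by simp
  moreover have "\<forall>i. 0 < i \<and> i < Suc n \<longrightarrow> ?p i < i" using pl u by (auto simp: less_Suc_eq)
  moreover have "\<forall>i<Suc n. ?B i \<subseteq> insert v V2 \<and> card (?B i) = K"
    using bags cardn Ssub by (auto simp: less_Suc_eq)
  moreover have "\<forall>i. 0 < i \<and> i < Suc n \<longrightarrow> card (?B i \<inter> ?B (?p i)) + 1 = K"
  proof (intro allI impI)
    fix i assume i: "0 < i \<and> i < Suc n"
    show "card (?B i \<inter> ?B (?p i)) + 1 = K"
    proof (cases "i = n")
      case True then show ?thesis using int_n u S by simp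
    next
      case False
      then have "i < n" "par i < n" using i pl[of i] by auto
      then show ?thesis using ed[of i] i False by simp
    qed
  qed
  moreover have "\<forall>i j. 0 < i \<and> i < Suc n \<and> 0 < j \<and> j < Suc n \<and> ?p j = i \<longrightarrow> ?B i \<inter> ?B (?p i) \<noteq> ?B i \<inter> ?B j"
  proof (intro allI impI)
    fix i j assume ij: "0 < i \<and> i < Suc n \<and> 0 < j \<and> j < Suc n \<and> ?p j = i"
    have in_: "i \<noteq> n"
    proof
      assume "i = n"
      then show False using ij u pl[of j] by (cases "j = n") auto
    qed
    then have i: "i < n" "par i < n" using ij pl[of i] by auto
    show "?B i \<inter> ?B (?p i) \<noteq> ?B i \<inter> ?B j"
    proof (cases "j = n")
      case False
      then show ?thesis using rt[of i j] ij in_ i by simp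
    next
      case True
      then have iu: "i = u" using ij by simp
      have "B' u \<inter> insert v S = S" using int_n by blast
      moreover have "B' u \<inter> B' (par u) \<noteq> S"
      proof
        assume "B' u \<inter> B' (par u) = S"
        then have "S \<subseteq> B' (par u)" by blast
        moreover have "par u < u" using pl[of u] ij iu u by simp
        ultimately show False using umin by blast
      qed
      ultimately show ?thesis using True iu in_ i by simp
    qed
  qed
  moreover have "\<forall>x i j. 0 < i \<and> i < Suc n \<and> j < i \<and> x \<in> ?B i \<and> x \<in> ?B j \<longrightarrow> x \<in> ?B (?p i)"
  proof (intro allI impI)
    fix x i j assume a: "0 < i \<and> i < Suc n \<and> j < i \<and> x \<in> ?B i \<and> x \<in> ?B j"
    show "x \<in> ?B (?p i)"
    proof (cases "i = n")
      case True
      then have jn: "j < n" "j \<noteq> n" using a by auto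
      have "x \<in> ?B j" using a by blast
      then have "x \<in> B' j" using jn(2) by simp
      then have "x \<noteq> v" using vB jn by auto
      then have "x \<in> S" using a True by simp
      then show ?thesis using True u by auto
    next
      case False
      then have "i < n" "j < n" "par i < n" using a pl[of i] by auto
      then show ?thesis using cl[of i j x] a False by auto
    qed
  qed
  moreover have "(\<Union>i<Suc n. ?B i) = insert v V2"
  proof -
    have "(\<Union>i<Suc n. ?B i) = (\<Union>i<n. B' i) \<union> insert v S"
      by (auto simp: lessThan_Suc)
    then show ?thesis using un Ssub by auto
  qed
  ultimately show ?thesis unfolding td_out_def by blast
qed



lemma key_lemma:
  "td_in N F B V K \<Longrightarrow> \<exists>n par B'. td_out V K n par B' \<and> (\<forall>t\<in>N. \<exists>i<n. B t \<subseteq> B' i)"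
proof (induction "card N + card V" arbitrary: N F B V rule: less_induct)
  case less
  note inp = less.prems
  have T: "is_tree N F" and finV: "finite V" and KV: "K \<le> card V"
    and bg: "\<And>t. t \<in> N \<Longrightarrow> B t \<subseteq> V \<and> card (B t) \<le> K"
    and un: "(\<Union>t\<in>N. B t) = V" and cn: "\<And>v. v \<in> V \<Longrightarrow> connected_on N F {t\<in>N. v \<in> B t}"
    using inp unfolding td_in_def by auto
  have finN: "finite N" and neN: "N \<noteq> {}" and sg: "simple_graph N F" using T unfolding is_tree_def by auto
  show ?case
  proof (cases "card V = K")
    case True
    have "td_out V K 1 id (\<lambda>_. V)" unfolding td_out_def using True by auto
    moreover have "\<forall>t\<in>N. \<exists>i<(1::nat). B t \<subseteq> V" using bg by (intro ballI exI[of _ 0]) auto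
    ultimately show ?thesis by blast
  next
    case False
    then have KV': "K < card V" using KV by simp
    have "\<exists>a\<in>N. \<exists>b\<in>N. a \<noteq> b"
    proof (rule ccontr)
      assume "\<not> ?thesis"
      then obtain t where "N = {t}" using neN by blast
      then have "V = B t" "card (B t) \<le> K" using un bg by auto
      then show False using KV' by simp
    qed
    then obtain l p where lN: "l \<in> N" and lf: "is_leaf F l p" using leaf_exists[OF T] by blast
    have lp: "{l, p} \<in> F" using lf unfolding is_leaf_def by simp
    have pN: "p \<in> N" and pl: "p \<noteq> l" using edge_distinct[OF sg lp] by auto
    show ?thesis
    proof (cases "B l \<subseteq> B p")
      case True
      define N' where "N' = N - {l}"
      define F' where "F' = {e \<in> F. l \<notin> e}"
      have "td_in N' F' B V K" unfolding td_in_def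
      proof (intro conjI ballI)
        show "is_tree N' F'" unfolding N'_def F'_def by (rule tree_remove_leaf[OF T lf])
        show "(\<Union>t\<in>N'. B t) = V"
        proof
          show "(\<Union>t\<in>N'. B t) \<subseteq> V" using un N'_def by auto
          show "V \<subseteq> (\<Union>t\<in>N'. B t)"
          proof
            fix x assume "x \<in> V"
            then obtain t where t: "t \<in> N" "x \<in> B t" using un by auto
            show "x \<in> (\<Union>t\<in>N'. B t)"
            proof (cases "t = l")
              case True then show ?thesis using t \<open>B l \<subseteq> B p\<close> pN pl N'_def by blast
            next
              case False then show ?thesis using t N'_def by blast
            qed
          qed
        qed
        fix v assume vV: "v \<in> V"
        show "connected_on N' F' {t \<in> N'. v \<in> B t}" unfolding connected_on_def
        proof (intro ballI)
          fix a b assume ab: "a \<in> {t \<in> N'. v \<in> B t}" "b \<in> {t \<in> N'. v \<in> B t}"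
          then obtain xs where xs: "is_path N F xs" "hd xs = a" "last xs = b" "set xs \<subseteq> {t \<in> N. v \<in> B t}"
            using cn[OF vV] unfolding connected_on_def N'_def by blast
          have "l \<notin> set xs" using leaf_not_inner[OF lf xs(1)] xs ab N'_def by auto
          then show "\<exists>xs. is_path N' F' xs \<and> hd xs = a \<and> last xs = b \<and> set xs \<subseteq> {t \<in> N'. v \<in> B t}"
            using path_avoid[OF xs(1)] xs unfolding N'_def F'_def by blast
        qed
      qed (use finV KV bg N'_def in auto)
      moreover have "card N' + card V < card N + card V"
        using card_Diff1_less[OF finN lN] N'_def by simp
      ultimately obtain n par B' where o: "td_out V K n par B'" and cov: "\<forall>t\<in>N'. \<exists>i<n. B t \<subseteq> B' i"
        using less.hyps by blast
      have "\<forall>t\<in>N. \<exists>i<n. B t \<subseteq> B' i"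
      proof
        fix t assume t: "t \<in> N"
        show "\<exists>i<n. B t \<subseteq> B' i"
        proof (cases "t = l")
          case True
          obtain i where "i < n" "B p \<subseteq> B' i" using cov pN pl N'_def by blast
          then show ?thesis using True \<open>B l \<subseteq> B p\<close> by blast
        next
          case False then show ?thesis using cov t N'_def by blast
        qed
      qed
      then show ?thesis using o by blast
    next
      case False
      then obtain v where vl: "v \<in> B l" and vp: "v \<notin> B p" by blast
      have vV: "v \<in> V" using vl bg[OF lN] by blast
      have only: "\<And>t. t \<in> N \<Longrightarrow> t \<noteq> l \<Longrightarrow> v \<notin> B t"
      proof
        fix t assume t: "t \<in> N" "t \<noteq> l" "v \<in> B t"
        obtain xs where xs: "is_path N F xs" "hd xs = l" "last xs = t" "set xs \<subseteq> {t \<in> N. v \<in> B t}"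
          using cn[OF vV] vl lN t unfolding connected_on_def by blast
        have "p \<in> set xs" using leaf_first[OF lf xs(1) xs(2)] xs t by simp
        then show False using xs vp by blast
      qed
      define B2 where "B2 = B(l := B l - {v})"
      define V2 where "V2 = V - {v}"
      have finBl: "finite (B l)" using bg[OF lN] finV finite_subset by blast
      have cBl: "card (B l) \<le> K" using bg[OF lN] by simp
      have K1: "1 \<le> K" using cBl vl finBl by (metis One_nat_def Suc_leI card_gt_0_iff empty_iff le_trans)
      have "td_in N F B2 V2 K" unfolding td_in_def
      proof (intro conjI ballI)
        show "is_tree N F" by (rule T)
        show "finite V2" using finV V2_def by simp
        show "K \<le> card V2" using KV' finV vV V2_def by simp
        fix t assume t: "t \<in> N"
        show "B2 t \<subseteq> V2" using bg[OF t] only[OF t] B2_def V2_def by auto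
        show "card (B2 t) \<le> K"
        proof (cases "t = l")
          case True
          have "card (B l - {v}) \<le> card (B l)" by (rule card_Diff1_le)
          then show ?thesis using True B2_def cBl by simp
        next
          case False then show ?thesis using bg[OF t] B2_def by simp
        qed
      next
        show "(\<Union>t\<in>N. B2 t) = V2"
        proof
          show "(\<Union>t\<in>N. B2 t) \<subseteq> V2" using bg only B2_def V2_def by auto
          show "V2 \<subseteq> (\<Union>t\<in>N. B2 t)"
          proof
            fix x assume x: "x \<in> V2"
            then obtain t where t: "t \<in> N" "x \<in> B t" using un V2_def by auto
            have "x \<in> B2 t" using t x B2_def V2_def by auto
            then show "x \<in> (\<Union>t\<in>N. B2 t)" using t by blast
          qed
        qed
      next
        fix x assume x: "x \<in> V2"
        have "{t \<in> N. x \<in> B2 t} = {t \<in> N. x \<in> B t}" using x B2_def V2_def by auto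
        then show "connected_on N F {t \<in> N. x \<in> B2 t}" using cn x V2_def by simp
      qed
      moreover have "card N + card V2 < card N + card V"
        using card_Diff1_less[OF finV vV] V2_def by simp
      ultimately obtain n par B' where o: "td_out V2 K n par B'" and cov: "\<forall>t\<in>N. \<exists>i<n. B2 t \<subseteq> B' i"
        using less.hyps by blast
      obtain s where s: "s < n" "B l - {v} \<subseteq> B' s" using cov lN B2_def by fastforce
      have bs: "B' s \<subseteq> V2" "card (B' s) = K" using o s unfolding td_out_def by auto
      have finBs: "finite (B' s)" using bs finV V2_def finite_subset by blast
      have "card (B l - {v}) \<le> K - 1" using cBl vl finBl by simp
      then obtain S where S: "B l - {v} \<subseteq> S" "S \<subseteq> B' s" "card S = K - 1"
        using exists_subset_between[of "B l - {v}" "K - 1" "B' s"] s bs finBs by auto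
      have cS: "card S + 1 = K" using S K1 by simp
      have vV2: "v \<notin> V2" and fV2: "finite V2" using finV V2_def by auto
      obtain u where o2: "td_out (insert v V2) K (Suc n) (par(n := u)) (B'(n := insert v S))"
        using add_node[OF o vV2 fV2 cS S(2) s(1)] by blast
      have "insert v V2 = V" using vV V2_def by auto
      moreover have "\<forall>t\<in>N. \<exists>i<Suc n. B t \<subseteq> (B'(n := insert v S)) i"
      proof
        fix t assume t: "t \<in> N"
        show "\<exists>i<Suc n. B t \<subseteq> (B'(n := insert v S)) i"
        proof (cases "t = l")
          case True
          then show ?thesis using S by (intro exI[of _ n]) auto
        next
          case False
          then obtain i where "i < n" "B2 t \<subseteq> B' i" using cov t by blast
          then show ?thesis using False B2_def by (intro exI[of _ i]) auto
        qed
      qed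
      ultimately show ?thesis using o2 by metis
    qed
  qed
qed



lemma single_td:
  assumes "simple_graph V E"
  shows "tree_decomp V E {0::nat} {} (\<lambda>_. V)"
proof -
  have "is_tree {0::nat} {}"
    unfolding is_tree_def simple_graph_def has_cycle_def
    by (auto intro!: connected_onI[of 0] exI[of _ "[0]"] simp: is_path_def)
  moreover have "\<forall>e\<in>E. e \<subseteq> V" using assms unfolding simple_graph_def by auto
  moreover have "connected_on {0::nat} {} {0}" by (rule connected_onI[of 0]) (auto intro!: exI[of _ "[0]"])
  ultimately show ?thesis unfolding tree_decomp_def by auto
qed

theorem proposition2p3:
  fixes V :: "'a set" and E :: "'a set set"
  assumes "finite_simple_graph V E"
  shows "\<exists>(N :: nat set) F B r. rooted_tree_decomp V E N F B r"
proof -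
  have finV: "finite V" and sg: "simple_graph V E" using assms unfolding finite_simple_graph_def by auto
  define W where "W = {td_width N B | (N :: nat set) F B. tree_decomp V E N F B}"
  have tw: "treewidth V E = Min W" unfolding treewidth_def W_def by simp
  have s1: "int (card V) - 1 \<in> W"
    using single_td[OF sg] unfolding W_def td_width_def by force
  have bnd: "w \<in> {-1 .. int (card V)}" if wW: "w \<in> W" for w
  proof -
    obtain N :: "nat set" and F B where d: "tree_decomp V E N F B" and w: "w = td_width N B"
      using wW W_def by auto
    have fN: "finite N" "N \<noteq> {}" using d unfolding tree_decomp_def is_tree_def by auto
    have "\<forall>t\<in>N. card (B t) \<le> card V" using d finV unfolding tree_decomp_def by (simp add: card_mono)
    then have "Max ((\<lambda>t. card (B t)) ` N) \<le> card V" using fN by simp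
    then show ?thesis using w unfolding td_width_def by auto
  qed
  have finW: "finite W" by (rule finite_subset[of W "{-1 .. int (card V)}"]) (use bnd in auto)
  have "Min W \<in> W" using finW s1 by (intro Min_in) auto
  then obtain N0 :: "nat set" and F0 B0 where d0: "tree_decomp V E N0 F0 B0" and w0: "Min W = td_width N0 B0"
    unfolding W_def by auto
  have mle: "Min W \<le> int (card V) - 1" using Min_le[OF finW s1] .
  have mge: "Min W \<ge> -1" using bnd \<open>Min W \<in> W\<close> by auto
  define K where "K = nat (Min W + 1)"
  have Kint: "int K = Min W + 1" using mge K_def by simp
  have KV: "K \<le> card V" using Kint mle by linarith
  have fN0: "finite N0" "N0 \<noteq> {}" using d0 unfolding tree_decomp_def is_tree_def by auto
  have bK: "card (B0 t) \<le> K" if "t \<in> N0" for t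
  proof -
    have "card (B0 t) \<le> Max ((\<lambda>t. card (B0 t)) ` N0)" using fN0 that by simp
    then show ?thesis using w0 Kint unfolding td_width_def by linarith
  qed
  have "td_in N0 F0 B0 V K" unfolding td_in_def using d0 finV KV bK unfolding tree_decomp_def by auto
  then obtain n par B' where o: "td_out V K n par B'" and cov: "\<forall>t\<in>N0. \<exists>i<n. B0 t \<subseteq> B' i"
    using key_lemma by blast
  have n0: "0 < n" and pl: "\<And>i. 0 < i \<Longrightarrow> i < n \<Longrightarrow> par i < i" using o unfolding td_out_def by auto
  have bags: "\<And>i. i < n \<Longrightarrow> B' i \<subseteq> V \<and> card (B' i) = K" using o unfolding td_out_def by auto
  have ed: "\<And>i. 0 < i \<Longrightarrow> i < n \<Longrightarrow> card (B' i \<inter> B' (par i)) + 1 = K" using o unfolding td_out_def by auto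
  have rt: "\<And>i j. 0 < i \<Longrightarrow> i < n \<Longrightarrow> 0 < j \<Longrightarrow> j < n \<Longrightarrow> par j = i \<Longrightarrow> B' i \<inter> B' (par i) \<noteq> B' i \<inter> B' j"
    using o unfolding td_out_def by auto
  have cl: "\<And>x i j. 0 < i \<Longrightarrow> i < n \<Longrightarrow> j < i \<Longrightarrow> x \<in> B' i \<Longrightarrow> x \<in> B' j \<Longrightarrow> x \<in> B' (par i)"
    using o unfolding td_out_def by blast
  have un: "(\<Union>i<n. B' i) = V" using o unfolding td_out_def by auto
  interpret ptree n par using pl by unfold_locales
  have TD: "tree_decomp V E {..<n} F B'"
    unfolding tree_decomp_def
  proof (intro conjI ballI)
    show "is_tree {..<n} F" using is_tree n0 by simp
    show "\<And>t. t \<in> {..<n} \<Longrightarrow> B' t \<subseteq> V" using bags by auto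
    show "(\<Union>t\<in>{..<n}. B' t) = V" using un by simp
    fix e assume "e \<in> E"
    then obtain t where "t \<in> N0" "e \<subseteq> B0 t" using d0 unfolding tree_decomp_def by blast
    then show "\<exists>t\<in>{..<n}. e \<subseteq> B' t" using cov by blast
  next
    fix x assume "x \<in> V"
    show "connected_on {..<n} F {t \<in> {..<n}. x \<in> B' t}"
    proof (rule conn_closed)
      fix i j assume i: "i \<in> {t \<in> {..<n}. x \<in> B' t}" and j: "j \<in> {t \<in> {..<n}. x \<in> B' t}" and ji: "j < i"
      have "0 < i" using ji by simp
      then show "par i \<in> {t \<in> {..<n}. x \<in> B' t}" using cl[of i j x] i j ji pl[of i] by auto
    qed auto
  qed
  have FULL: "full_tree_decomp V E {..<n} F B'"
    unfolding full_tree_decomp_def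
  proof (intro conjI allI impI ballI)
    show "tree_decomp V E {..<n} F B'" by (rule TD)
    fix t assume "t \<in> {..<n}"
    then show "int (card (B' t)) = treewidth V E + 1" using bags Kint tw by auto
  next
    fix t t' assume e: "{t, t'} \<in> F"
    have c: "int (card (B' i \<inter> B' (par i))) = treewidth V E" if "0 < i" "i < n" for i
      using ed[OF that] Kint tw by linarith
    have ad: "t < n" "t' < n" "(0 < t \<and> t' = par t) \<or> (0 < t' \<and> t = par t')" using adj[OF e] by auto
    show "int (card (B' t \<inter> B' t')) = treewidth V E"
    proof (cases "0 < t \<and> t' = par t")
      case True then show ?thesis using c[of t] ad by simp
    next
      case False
      then have "0 < t'" "t = par t'" using ad by auto
      then show ?thesis using c[of t'] ad by (simp add: Int_commute)
    qed
  qed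
  have "rooted_tree_decomp V E {..<n} F B' 0"
    unfolding rooted_tree_decomp_def
  proof (intro conjI allI impI)
    show "full_tree_decomp V E {..<n} F B'" by (rule FULL)
    show "0 \<in> {..<n}" using n0 by simp
    fix t s t' assume a: "t \<in> {..<n} \<and> t \<noteq> 0 \<and> tree_parent {..<n} F 0 t s \<and> tree_parent {..<n} F 0 t' t"
    have tp1: "tree_parent {..<n} F 0 t s" using a by blast
    have tp2: "tree_parent {..<n} F 0 t' t" using a by blast
    have s: "s = par t" using tree_parent_eq[OF tp1] .
    have t'1: "t = par t'" using tree_parent_eq[OF tp2] .
    have t'2: "t' < n" "0 < t'" using tp2 unfolding tree_parent_def by auto
    have t1: "0 < t" "t < n" using a by auto
    show "B' t \<inter> B' s \<noteq> B' t \<inter> B' t'" using rt[OF t1 t'2(2) t'2(1) t'1[symmetric]] s by simp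
  qed
  then show ?thesis by blast
qed

end
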